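(* Let $p\geq2$ be an integer and consider, on the domain $\{(\theta_1,\theta_p,I_1,I_p)\in\mathbb{T}^2\times(0,\infty)^2\}$, the Hamiltonian \[ \mathcal{G}^+(\theta_1,\theta_p,I_1,I_p):=\sqrt2^{\,1-p}\,I_1^{p/2}\sqrt{I_p}\,\cos(p\,\theta_1-\theta_p), \] with $(\theta_1,I_1)$ and $(\theta_p,I_p)$ canonically conjugate pairs. Let $\mathtt{c}>0$. Then for every sufficiently small $\varepsilon>0$ with $\mathtt{c}>p\varepsilon$ there exists an orbit $g^+_{\varepsilon,\mathtt{c}}(t)=(\theta_1(t),\theta_p(t),I_1(t),I_p(t))$ of $\mathcal{G}^+$ and a time $T_0>0$ such that \[ I_1(0)=\mathtt{c}-p\varepsilon,\quad I_p(0)=\varepsilon,\qquad I_1(T_0)=\mathtt{c}(1-p^{-1}),\quad I_p(T_0)=\frac{\mathtt{c}}{p^2}, \] and \[ \frac{\sqrt2^{\,p+1}}{\mathtt{c}^{\frac{p-1}{2}}}\,p^{-1}\le T_0\le\frac{\sqrt2^{\,p+1}}{\mathtt{c}^{\frac{p-1}{2}}\,(1-p^{-1})^{p/2}}\,p^{-1}. \]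
   Context: The orbit is a solution of Hamilton's equations $\dot\theta_k=\partial_{I_k}\mathcal{G}^+$, $\dot I_k=-\partial_{\theta_k}\mathcal{G}^+$, $k\in\{1,p\}$. "Sufficiently small $\varepsilon$" means $\varepsilon$ below a threshold that may depend on $\mathtt{c}$ and $p$. *)

theory Defs
  imports "HOL-Analysis.Analysis"
begin

text \<open>The Hamiltonian G^+ in the variables (theta_1, theta_p, I_1, I_p); angles are
  represented by real lifts (functions on the torus are 2pi-periodic functions).\<close>
definition Gplus :: "nat \<Rightarrow> real \<Rightarrow> real \<Rightarrow> real \<Rightarrow> real \<Rightarrow> real" where
  "Gplus p th1 thp I1 Ip =
     sqrt 2 powr (1 - real p) * I1 powr (real p / 2) * sqrt Ip * cos (real p * th1 - thp)"

definition hamiltonian_orbit ::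
  "nat \<Rightarrow> real \<Rightarrow> (real \<Rightarrow> real) \<Rightarrow> (real \<Rightarrow> real) \<Rightarrow> (real \<Rightarrow> real) \<Rightarrow> (real \<Rightarrow> real) \<Rightarrow> bool" where
  "hamiltonian_orbit p T th1 thp I1 Ip \<longleftrightarrow>
     (\<forall>t\<in>{0..T}.
        I1 t > 0 \<and> Ip t > 0 \<and>
        (th1 has_real_derivative deriv (\<lambda>x. Gplus p (th1 t) (thp t) x (Ip t)) (I1 t)) (at t within {0..T}) \<and>
        (thp has_real_derivative deriv (\<lambda>x. Gplus p (th1 t) (thp t) (I1 t) x) (Ip t)) (at t within {0..T}) \<and>
        (I1 has_real_derivative - deriv (\<lambda>x. Gplus p x (thp t) (I1 t) (Ip t)) (th1 t)) (at t within {0..T}) \<and>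
        (Ip has_real_derivative - deriv (\<lambda>x. Gplus p (th1 t) x (I1 t) (Ip t)) (thp t)) (at t within {0..T}))"

end

theory Submission
  imports Defs
begin


lemma int_deriv_at:
  fixes h :: "real \<Rightarrow> real"
  assumes "continuous_on {a..b} h" "a < x" "x < b"
  shows "((\<lambda>x. integral {a..x} h) has_real_derivative h x) (at x)"
proof -
  have "((\<lambda>x. integral {a..x} h) has_real_derivative h x) (at x within {a..b})"
    using integral_has_real_derivative[OF assms(1)] assms by auto
  moreover have "at x within {a..b} = at x"
    using assms by (intro at_within_interior) auto
  ultimately show ?thesis by simp
qed

lemma inv_deriv:
  fixes F F' :: "real \<Rightarrow> real"
  assumes ab: "a < b" and d: "\<And>x. a \<le> x \<Longrightarrow> x \<le> b \<Longrightarrow> DERIV F x :> F' x"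
    and pos: "\<And>x. a \<le> x \<Longrightarrow> x \<le> b \<Longrightarrow> F' x > 0"
  shows "\<exists>g. (\<forall>x\<in>{a..b}. g (F x) = x) \<and> (\<forall>x\<in>{a..b}. \<forall>y\<in>{a..b}. x < y \<longrightarrow> F x < F y) \<and>
     (\<forall>t. F a < t \<and> t < F b \<longrightarrow> g t \<in> {a..b} \<and> DERIV g t :> inverse (F' (g t)))"
proof -
  have mono: "F x < F y" if "a \<le> x" "x < y" "y \<le> b" for x y
  proof (rule DERIV_pos_imp_increasing[OF that(2)])
    fix z assume z: "x \<le> z" "z \<le> y"
    then have "a \<le> z" "z \<le> b" using that by auto
    then show "\<exists>y. DERIV F z :> y \<and> y > 0" using d pos by blast
  qed
  have inj: "inj_on F {a..b}"
    unfolding inj_on_def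
  proof (intro ballI impI)
    fix x y assume x: "x \<in> {a..b}" and y: "y \<in> {a..b}" and e: "F x = F y"
    show "x = y"
    proof (rule ccontr)
      assume "x \<noteq> y"
      then consider "x < y" | "y < x" by linarith
      then show False
      proof cases
        case 1 then have "F x < F y" using mono x y by auto
        then show False using e by simp
      next
        case 2 then have "F y < F x" using mono x y by auto
        then show False using e by simp
      qed
    qed
  qed
  define g where "g = the_inv_into {a..b} F"
  have gF: "\<forall>x\<in>{a..b}. g (F x) = x" using inj the_inv_into_f_f g_def by metis
  have cont: "continuous_on {a..b} F"
    by (rule DERIV_atLeastAtMost_imp_continuous_on) (use d in blast)
  have cg: "continuous_on (F ` {a..b}) g"
    by (rule continuous_on_inv[OF cont compact_Icc gF])
  have img: "{F a<..<F b} \<subseteq> F ` {a..b}"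
  proof
    fix t assume "t \<in> {F a<..<F b}"
    then obtain x where "a \<le> x" "x \<le> b" "F x = t"
      using IVT'[of F a t b, OF _ _ _ cont] ab by auto
    then show "t \<in> F ` {a..b}" by auto
  qed
  have cg2: "continuous_on {F a<..<F b} g" using continuous_on_subset[OF cg img] .
  have main: "g t \<in> {a..b} \<and> DERIV g t :> inverse (F' (g t))" if t: "F a < t" "t < F b" for t
  proof -
    obtain x where x: "x \<in> {a..b}" "t = F x" using img t by auto
    have gt: "g t = x" using gF x by auto
    have "DERIV g t :> inverse (F' (g t))"
    proof (rule DERIV_inverse_function[where a="F a" and b="F b"])
      show "DERIV F (g t) :> F' (g t)" using d x gt by auto
      show "F' (g t) \<noteq> 0" using pos x gt by (metis atLeastAtMost_iff less_irrefl)
      show "F a < t" "t < F b" by fact+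
      show "F (g y) = y" if "F a < y" "y < F b" for y
        using img that gF by auto
      show "isCont g t"
        using cg2 t by (simp add: continuous_on_eq_continuous_at)
    qed
    then show ?thesis using gt x by auto
  qed
  show ?thesis
    by (rule exI[of _ g]) (use gF mono main in auto)
qed



lemma G1: "deriv (\<lambda>x. Gplus p 0 (pi/2) x y) z = 0"
proof -
  have "(\<lambda>x. Gplus p 0 (pi/2) x y) = (\<lambda>x. 0)" by (simp add: Gplus_def)
  then show ?thesis by simp
qed

lemma G2: "deriv (\<lambda>x. Gplus p 0 (pi/2) y x) z = 0"
proof -
  have "(\<lambda>x. Gplus p 0 (pi/2) y x) = (\<lambda>x. 0)" by (simp add: Gplus_def)
  then show ?thesis by simp
qed

lemma G3: "deriv (\<lambda>x. Gplus p x (pi/2) u v) 0 = (sqrt 2 powr (1 - real p) * u powr (real p / 2) * sqrt v) * real p"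
proof (rule DERIV_imp_deriv)
  show "((\<lambda>x. Gplus p x (pi/2) u v) has_real_derivative (sqrt 2 powr (1 - real p) * u powr (real p / 2) * sqrt v) * real p) (at 0)"
    unfolding Gplus_def
    by (auto intro!: derivative_eq_intros)
qed

lemma G4: "deriv (\<lambda>x. Gplus p 0 x u v) (pi/2) = - (sqrt 2 powr (1 - real p) * u powr (real p / 2) * sqrt v)"
proof (rule DERIV_imp_deriv)
  show "((\<lambda>x. Gplus p 0 x u v) has_real_derivative - (sqrt 2 powr (1 - real p) * u powr (real p / 2) * sqrt v)) (at (pi/2))"
    unfolding Gplus_def
    by (auto intro!: derivative_eq_intros)
qed

lemma ineq_lower:
  fixes a0 c s :: real and p :: nat
  assumes "a0 > 0" "c > 0" "p \<ge> 2" "s > 0" "p * s < c"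
  shows "(1/(a0 * c powr (real p/2))) * (1/sqrt s + (real p/c) * sqrt s) \<le> 1/(a0 * (c - real p * s) powr (real p/2) * sqrt s)"
proof -
  define r where "r = (c - real p * s)/c"
  have r0: "0 < r" "r \<le> 1" using assms by (auto simp: r_def field_simps)
  have cr: "c - real p * s = c * r" using assms by (simp add: r_def)
  have "r powr (real p/2) \<le> r powr 1"
    by (rule powr_mono') (use assms r0 in auto)
  then have rp: "r powr (real p/2) \<le> r" using r0 by simp
  have X: "(c - real p * s) powr (real p/2) \<le> c powr (real p/2) * r"
    unfolding cr powr_mult using rp assms by (simp add: mult_left_mono)
  have pos1: "0 < (c - real p * s) powr (real p/2)" using assms by simp
  have ss: "sqrt s > 0" using assms by simp
  have cp: "c powr (real p/2) > 0" using assms by simp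
  have step1: "1/(a0 * (c powr (real p/2) * r) * sqrt s) \<le> 1/(a0 * (c - real p * s) powr (real p/2) * sqrt s)"
    apply (rule divide_left_mono)
    using X assms pos1 ss r0 by (auto intro!: mult_right_mono mult_left_mono mult_pos_pos)
  have inv: "1 + real p * s / c \<le> 1 / r"
  proof -
    have "(1 + real p * s / c) * r = 1 - (real p * s / c)^2"
      using assms by (simp add: r_def field_simps power2_eq_square)
    also have "\<dots> \<le> 1" by simp
    finally show ?thesis using r0 by (simp add: field_simps)
  qed
  have "(1/(a0 * c powr (real p/2))) * (1/sqrt s + (real p/c) * sqrt s)
      = (1/(a0 * c powr (real p/2) * sqrt s)) * (1 + real p * s / c)"
    using ss assms by (simp add: field_simps)
  also have "\<dots> \<le> (1/(a0 * c powr (real p/2) * sqrt s)) * (1/r)"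
    by (rule mult_left_mono[OF inv]) (use assms cp ss in simp)
  also have "\<dots> = 1/(a0 * (c powr (real p/2) * r) * sqrt s)" by simp
  finally show ?thesis using step1 by linarith
qed

lemma ineq_upper:
  fixes a0 c s :: real and p :: nat
  assumes "a0 > 0" "c > 0" "p \<ge> 2" "s > 0" "c * (1 - 1/real p) \<le> c - real p * s"
  shows "1/(a0 * (c - real p * s) powr (real p/2) * sqrt s) \<le> (1/(a0 * (c * (1 - 1/real p)) powr (real p/2))) * (1/sqrt s)"
proof -
  have "real p \<ge> 2" using assms by simp
  then have "0 < 1 - 1/real p" by (simp add: field_simps)
  then have q: "0 < c * (1 - 1/real p)" using assms by simp
  have "(c * (1 - 1/real p)) powr (real p/2) \<le> (c - real p * s) powr (real p/2)"
    by (rule powr_mono2) (use assms q in auto)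
  moreover have "0 < (c * (1 - 1/real p)) powr (real p/2)"
  proof -
    have "c * (1 - 1/real p) \<noteq> 0" using q by linarith
    then show ?thesis by (simp only: powr_gt_zero) simp
  qed
  ultimately show ?thesis using assms \<open>0 < 1 - 1/real p\<close>
    by (simp add: divide_simps mult_right_mono mult_left_mono)
qed



lemma num:
  fixes P q r :: real
  assumes "P \<ge> 2" "q > 0" "0 \<le> r" "r \<le> q/(4*P^2)"
  shows "3*r*q^2 + P*r^3 \<le> q^3/P^2"
proof -
  define u where "u = r * P^2"
  have P2: "P^2 > 0" using assms by simp
  have u0: "0 \<le> u" "u \<le> q/4" using assms P2 by (auto simp: u_def field_simps)
  have r_eq: "r = u / P^2" using P2 by (simp add: u_def)
  have "P * r^3 = u^3 / (P^2 * P^3)" unfolding r_eq using assms by (simp add: field_simps power3_eq_cube power2_eq_square)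
  also have "\<dots> \<le> u^3 / P^2"
  proof -
    have "P^3 \<ge> 1" using assms by (metis dual_order.trans le_numeral_extra(1) one_le_numeral one_le_power)
    then have "P^2 * 1 \<le> P^2 * P^3" using P2 by (intro mult_left_mono) auto
    then have "P^2 \<le> P^2 * P^3" by simp
    then show ?thesis by (intro divide_left_mono) (use u0 P2 assms in auto)
  qed
  finally have A: "P * r^3 \<le> u^3 / P^2" .
  have B: "3*r*q^2 = 3*u*q^2/P^2" unfolding r_eq by simp
  have C: "3*u*q^2 + u^3 \<le> q^3"
  proof -
    have "u^3 \<le> (q/4)^3" using u0 by (simp add: power_mono)
    moreover have "u*q^2 \<le> (q/4)*q^2" using u0 by (intro mult_right_mono) auto
    then have "3*u*q^2 \<le> 3*(q/4)*q^2" by simp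
    moreover have "(q/4)^3 = q^3/64" by (simp add: power_divide)
    moreover have "3*(q/4)*q^2 = 3*q^3/4" by (simp add: power2_eq_square power3_eq_cube)
    moreover have "q^3 > 0" using assms by simp
    ultimately show ?thesis by linarith
  qed
  have "3*r*q^2 + P*r^3 \<le> (3*u*q^2 + u^3)/P^2" using A B by (simp add: add_divide_distrib)
  also have "\<dots> \<le> q^3/P^2" using C P2 by (simp add: divide_right_mono)
  finally show ?thesis .
qed

lemma consts1:
  fixes c :: real and p :: nat
  assumes "c > 0" "p \<ge> 2"
  shows "2 * (1/(sqrt 2 powr (1 - real p) * c powr (real p/2))) * sqrt (c / (real p)^2)
     = sqrt 2 ^ (p + 1) / c powr ((real p - 1) / 2) * (1 / real p)"
    and "2 * (1/(sqrt 2 powr (1 - real p) * (c * (1 - 1/real p)) powr (real p/2))) * sqrt (c / (real p)^2)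
     = sqrt 2 ^ (p + 1) / (c powr ((real p - 1) / 2) * (1 - 1 / real p) powr (real p / 2)) * (1 / real p)"
proof -
  have s2: "sqrt 2 ^ (p + 1) = 2 * sqrt 2 powr (real p - 1)"
  proof -
    have "sqrt 2 ^ (p + 1) = sqrt 2 powr real (p + 1)" by (rule powr_realpow[symmetric]) simp
    also have "real (p + 1) = 2 + (real p - 1)" by simp
    also have "sqrt 2 powr (2 + (real p - 1)) = sqrt 2 powr 2 * sqrt 2 powr (real p - 1)" by (rule powr_add)
    also have "sqrt 2 powr 2 = 2" by (simp add: powr_numeral)
    finally show ?thesis .
  qed
  have ia: "sqrt 2 powr (1 - real p) = inverse (sqrt 2 powr (real p - 1))"
    by (simp add: powr_minus[symmetric])
  have ip: "sqrt 2 powr (real p - 1) > 0" by simp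
  have sc: "sqrt (c / (real p)^2) = sqrt c / real p" using assms by (simp add: real_sqrt_divide)
  have cp: "c powr (real p/2) = c powr ((real p - 1)/2) * sqrt c"
    using assms by (simp add: powr_half_sqrt[symmetric] powr_add[symmetric] diff_divide_distrib)
  have sq: "sqrt c > 0" using assms by simp
  have q: "1 - 1/real p > 0" using assms by (simp add: field_simps)
  show "2 * (1/(sqrt 2 powr (1 - real p) * c powr (real p/2))) * sqrt (c / (real p)^2)
     = sqrt 2 ^ (p + 1) / c powr ((real p - 1) / 2) * (1 / real p)"
    unfolding s2 sc cp ia using sq ip assms by (simp add: field_simps)
  show "2 * (1/(sqrt 2 powr (1 - real p) * (c * (1 - 1/real p)) powr (real p/2))) * sqrt (c / (real p)^2)
     = sqrt 2 ^ (p + 1) / (c powr ((real p - 1) / 2) * (1 - 1 / real p) powr (real p / 2)) * (1 / real p)"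
    unfolding s2 sc powr_mult cp ia using sq ip q assms by (simp add: field_simps)
qed


lemma key_alg:
  fixes C k M e q r P :: real
  assumes "P \<ge> 2" "q > 0" "r \<ge> 0" "C > 0"
    and "k = 2*P/(3*q^2)" "sqrt M = q/P" "M = q^2/P^2" "e = r^2" "sqrt e = r"
    and "3*r*q^2 + P*r^3 \<le> q^3/P^2"
  shows "2*C* sqrt M \<le> C*(2* sqrt M + k*(M * sqrt M)) - C*(2* sqrt e + k*(e * sqrt e))"
proof -
  have "C*(2* sqrt M + k*(M * sqrt M)) - C*(2* sqrt e + k*(e * sqrt e)) - 2*C* sqrt M
      = C * (k*(M * sqrt M - e * r) - 2*r)"
    using assms(9) by (simp add: algebra_simps)
  also have "k*(M * sqrt M - e * r) - 2*r = (2/(3*q^2)) * (q^3/P^2 - P * r^3 - 3*r*q^2)"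
    unfolding assms(5) assms(6) unfolding assms(7) assms(8) using assms(1,2)
    by (simp add: field_simps power2_eq_square power3_eq_cube)
  finally have eq: "C*(2* sqrt M + k*(M * sqrt M)) - C*(2* sqrt e + k*(e * sqrt e)) - 2*C* sqrt M
      = C * ((2/(3*q^2)) * (q^3/P^2 - P * r^3 - 3*r*q^2))" .
  have "0 \<le> C * ((2/(3*q^2)) * (q^3/P^2 - P * r^3 - 3*r*q^2))"
    using assms(2,4,10) by (intro mult_nonneg_nonneg) auto
  then show ?thesis using eq by linarith
qed

theorem lemma3p3:
  fixes p :: nat and c :: real
  assumes "p \<ge> 2" and "c > 0"
  shows "\<exists>\<epsilon>0>0. \<forall>\<epsilon>. 0 < \<epsilon> \<and> \<epsilon> < \<epsilon>0 \<and> real p * \<epsilon> < c \<longrightarrow>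
           (\<exists>th1 thp I1 Ip T0. T0 > 0 \<and> hamiltonian_orbit p T0 th1 thp I1 Ip \<and>
              I1 0 = c - real p * \<epsilon> \<and> Ip 0 = \<epsilon> \<and>
              I1 T0 = c * (1 - 1 / real p) \<and> Ip T0 = c / (real p)^2 \<and>
              sqrt 2 ^ (p + 1) / c powr ((real p - 1) / 2) * (1 / real p) \<le> T0 \<and>
              T0 \<le> sqrt 2 ^ (p + 1) / (c powr ((real p - 1) / 2) * (1 - 1 / real p) powr (real p / 2)) * (1 / real p))"
proof -
  define a0 where "a0 = sqrt 2 powr (1 - real p)"
  have a0: "a0 > 0" by (simp add: a0_def)
  define M where "M = c / (real p)^2"
  have p2: "real p \<ge> 2" using assms by simp
  have M0: "M > 0" using assms by (simp add: M_def)
  have Mcp: "M < c / real p" using assms p2 by (simp add: M_def power2_eq_square field_simps)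
  have pM: "real p * M = c / real p" using p2 by (simp add: M_def power2_eq_square)
  have cp_lt: "c / real p < c" using assms p2 by (simp add: field_simps)
  show ?thesis
  proof (rule exI[of _ "c / (32 * (real p)^4)"], intro conjI allI impI)
    show "c / (32 * (real p)^4) > 0" using assms by simp
    fix \<epsilon> :: real
    assume H: "0 < \<epsilon> \<and> \<epsilon> < c / (32 * (real p)^4) \<and> real p * \<epsilon> < c"
    then have e0: "0 < \<epsilon>" and e1: "\<epsilon> < c / (32 * (real p)^4)" by auto
    have eM: "\<epsilon> < M"
    proof -
      have "(real p)^2 \<le> 32 * (real p)^4"
      proof -
        have "1 \<le> (real p)^2" using p2 by (simp add: one_le_power)
        then have "(real p)^2 * 1 \<le> (real p)^2 * (real p)^2" by (intro mult_left_mono) auto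
        then have "(real p)^2 \<le> (real p)^4" by (simp add: power_add[symmetric])
        moreover have "(real p)^4 \<ge> 0" by simp
        ultimately show ?thesis by linarith
      qed
      then have "c / (32 * (real p)^4) \<le> c / (real p)^2"
        using assms p2 by (intro divide_left_mono) auto
      then show ?thesis using e1 by (simp add: M_def)
    qed
    define h where "h = (\<lambda>s. 1/(a0 * (c - real p * s) powr (real p/2) * sqrt s))"
    define \<alpha> where "\<alpha> = \<epsilon>/4"
    define \<alpha>2 where "\<alpha>2 = \<epsilon>/2"
    define K where "K = c / real p"
    have MK: "M < K" using Mcp by (simp add: K_def)
    define \<beta> where "\<beta> = (M + K)/2"
    define \<beta>2 where "\<beta>2 = (M + \<beta>)/2"
    have ord: "0 < \<alpha>" "\<alpha> < \<alpha>2" "\<alpha>2 < \<epsilon>" "\<epsilon> < M" "M < \<beta>2" "\<beta>2 < \<beta>" "\<beta> < K"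
      unfolding \<alpha>_def \<alpha>2_def \<beta>_def \<beta>2_def using e0 eM MK by (auto simp: field_simps)
    have cps: "c - real p * s > 0" if "s \<le> \<beta>" for s
    proof -
      have "real p * s \<le> real p * \<beta>" using that p2 by (intro mult_left_mono) auto
      also have "\<dots> < real p * (c / real p)" using ord p2 K_def by (intro mult_strict_left_mono) auto
      also have "\<dots> = c" using p2 by simp
      finally show ?thesis by simp
    qed
    have hcont: "continuous_on {\<alpha>..\<beta>} h"
    proof -
      have cpsB: "\<forall>s\<in>{\<alpha>..\<beta>}. c - real p * s \<noteq> 0 \<and> sqrt s \<noteq> 0 \<and> (c - real p * s) powr (real p/2) \<noteq> 0"
      proof
        fix s assume s: "s \<in> {\<alpha>..\<beta>}"
        then have "c - real p * s > 0" using cps by auto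
        moreover have "s > 0" using s ord by auto
        ultimately show "c - real p * s \<noteq> 0 \<and> sqrt s \<noteq> 0 \<and> (c - real p * s) powr (real p/2) \<noteq> 0" by simp
      qed
      show ?thesis
        unfolding h_def apply (intro continuous_intros)
        using cpsB a0 by auto
    qed
    define F where "F = (\<lambda>x. integral {\<alpha>..x} h - integral {\<alpha>..\<epsilon>} h)"
    have dF: "DERIV F x :> h x" if "\<alpha>2 \<le> x" "x \<le> \<beta>2" for x
    proof -
      have "((\<lambda>x. integral {\<alpha>..x} h - integral {\<alpha>..\<epsilon>} h) has_real_derivative h x - 0) (at x)"
        by (rule DERIV_diff[OF int_deriv_at[OF hcont] DERIV_const]) (use that ord in auto)
      then show ?thesis by (simp add: F_def)
    qed
    have hpos: "h x > 0" if "\<alpha> < x" "x \<le> \<beta>" for x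
      using that ord cps[OF that(2)] a0 by (simp add: h_def)
    obtain g where g1: "\<forall>x\<in>{\<alpha>2..\<beta>2}. g (F x) = x"
      and g2: "\<forall>x\<in>{\<alpha>2..\<beta>2}. \<forall>y\<in>{\<alpha>2..\<beta>2}. x < y \<longrightarrow> F x < F y"
      and g3: "\<forall>t. F \<alpha>2 < t \<and> t < F \<beta>2 \<longrightarrow> g t \<in> {\<alpha>2..\<beta>2} \<and> DERIV g t :> inverse (h (g t))"
      using inv_deriv[of \<alpha>2 \<beta>2 F h] ord dF hpos by force
    define T0 where "T0 = F M"
    have F0: "F \<epsilon> = 0" by (simp add: F_def)
    have g2': "F x < F y" if "\<alpha>2 \<le> x" "x < y" "y \<le> \<beta>2" for x y
      using g2 that by auto
    have g1': "g (F x) = x" if "\<alpha>2 \<le> x" "x \<le> \<beta>2" for x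
      using g1 that by auto
    have Fa: "F \<alpha>2 < 0" using g2'[of \<alpha>2 \<epsilon>] ord F0 by linarith
    have FT: "0 < T0" unfolding T0_def using g2'[of \<epsilon> M] ord F0 by linarith
    have Fb: "T0 < F \<beta>2" unfolding T0_def using g2'[of M \<beta>2] ord by linarith
    have gt: "g t \<in> {\<alpha>2..\<beta>2} \<and> DERIV g t :> inverse (h (g t))" if "0 \<le> t" "t \<le> T0" for t
      using g3 that Fa Fb by auto
    have g0: "g 0 = \<epsilon>" using g1'[of \<epsilon>] ord F0 by simp
    have gT: "g T0 = M" unfolding T0_def using g1'[of M] ord by simp
    have hinv: "inverse (h s) = a0 * (c - real p * s) powr (real p/2) * sqrt s" for s
      by (simp add: h_def)
    show "\<exists>th1 thp I1 Ip T0. T0 > 0 \<and> hamiltonian_orbit p T0 th1 thp I1 Ip \<and>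
              I1 0 = c - real p * \<epsilon> \<and> Ip 0 = \<epsilon> \<and>
              I1 T0 = c * (1 - 1 / real p) \<and> Ip T0 = c / (real p)^2 \<and>
              sqrt 2 ^ (p + 1) / c powr ((real p - 1) / 2) * (1 / real p) \<le> T0 \<and>
              T0 \<le> sqrt 2 ^ (p + 1) / (c powr ((real p - 1) / 2) * (1 - 1 / real p) powr (real p / 2)) * (1 / real p)"
    proof (intro exI conjI)
      show "T0 > 0" by (rule FT)
      show "hamiltonian_orbit p T0 (\<lambda>_. 0) (\<lambda>_. pi/2) (\<lambda>t. c - real p * g t) g"
        unfolding hamiltonian_orbit_def
      proof (intro ballI conjI)
        fix t assume t: "t \<in> {0..T0}"
        then have gt1: "g t \<in> {\<alpha>2..\<beta>2}" and gd: "DERIV g t :> inverse (h (g t))" using gt by auto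
        show "c - real p * g t > 0" using cps gt1 ord by auto
        show "g t > 0" using gt1 ord by auto
        show "((\<lambda>_. 0) has_real_derivative deriv (\<lambda>x. Gplus p ((\<lambda>_. 0) t) ((\<lambda>_. pi/2) t) x (g t)) (c - real p * g t)) (at t within {0..T0})"
          by (simp add: G1)
        show "((\<lambda>_. pi/2) has_real_derivative deriv (\<lambda>x. Gplus p ((\<lambda>_. 0) t) ((\<lambda>_. pi/2) t) (c - real p * g t) x) (g t)) (at t within {0..T0})"
          by (simp add: G2)
        have d1: "((\<lambda>t. c - real p * g t) has_real_derivative 0 - real p * inverse (h (g t))) (at t)"
          by (intro DERIV_diff DERIV_const DERIV_cmult gd)
        have e1: "- deriv (\<lambda>x. Gplus p x ((\<lambda>_. pi/2) t) (c - real p * g t) (g t)) ((\<lambda>_. 0) t) = 0 - real p * inverse (h (g t))"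
          by (simp add: G3 hinv a0_def)
        show "((\<lambda>t. c - real p * g t) has_real_derivative - deriv (\<lambda>x. Gplus p x ((\<lambda>_. pi/2) t) ((\<lambda>t. c - real p * g t) t) (g t)) ((\<lambda>_. 0) t)) (at t within {0..T0})"
          unfolding e1[simplified] using has_field_derivative_at_within[OF d1] by simp
        have e2: "- deriv (\<lambda>x. Gplus p ((\<lambda>_. 0) t) x (c - real p * g t) (g t)) ((\<lambda>_. pi/2) t) = inverse (h (g t))"
          by (simp add: G4 hinv a0_def)
        show "(g has_real_derivative - deriv (\<lambda>x. Gplus p ((\<lambda>_. 0) t) x ((\<lambda>t. c - real p * g t) t) (g t)) ((\<lambda>_. pi/2) t)) (at t within {0..T0})"
          unfolding e2[simplified] using has_field_derivative_at_within[OF gd] by simp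
      qed
      show "c - real p * g 0 = c - real p * \<epsilon>" by (simp add: g0)
      show "g 0 = \<epsilon>" by (rule g0)
      show "c - real p * g T0 = c * (1 - 1 / real p)" using pM by (simp add: gT right_diff_distrib)
      show "g T0 = c / (real p)^2" by (simp add: gT M_def)

      have dFe: "DERIV F x :> h x" if "\<epsilon> \<le> x" "x \<le> M" for x
        using dF that ord by auto
      have sM: "sqrt M = sqrt c / real p" using assms p2 by (simp add: M_def real_sqrt_divide)
      define C where "C = 1/(a0 * c powr (real p/2))"
      have C0: "C > 0" using a0 assms by (simp add: C_def)
      define k where "k = 2 * real p / (3*c)"
      define \<psi> where "\<psi> = (\<lambda>x. C*(2* sqrt x + k*(x* sqrt x)))"
      have d\<psi>: "DERIV \<psi> x :> C*(1/sqrt x + (real p/c) * sqrt x)" if "x > 0" for x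
      proof -
        have "DERIV \<psi> x :> C*(2*(inverse (sqrt x)/2) + k*(1* sqrt x + inverse (sqrt x)/2 * x))"
          unfolding \<psi>_def using that
          by (intro DERIV_cmult DERIV_add DERIV_mult DERIV_ident DERIV_real_sqrt)
        moreover have "C*(2*(inverse (sqrt x)/2) + k*(1* sqrt x + inverse (sqrt x)/2 * x)) = C*(1/sqrt x + (real p/c) * sqrt x)"
        proof -
          have xs: "inverse (sqrt x) * x = sqrt x" using that real_div_sqrt[of x] by (simp add: divide_inverse mult.commute)
          have e1: "k*(1* sqrt x + inverse (sqrt x)/2 * x) = (k * (3/2)) * sqrt x" using xs by (simp add: algebra_simps)
          have e2: "k * (3/2) = real p / c" using assms by (simp add: k_def)
          have e: "k*(1* sqrt x + inverse (sqrt x)/2 * x) = (real p / c) * sqrt x" unfolding e1 e2 ..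
          have e3: "2*(inverse (sqrt x)/2) = 1/sqrt x" by (simp add: inverse_eq_divide)
          show ?thesis unfolding e e3 ..
        qed
        ultimately show ?thesis by (rule DERIV_cong)
      qed
      have lowmono: "F \<epsilon> - \<psi> \<epsilon> \<le> F M - \<psi> M"
      proof (rule DERIV_nonneg_imp_increasing_open[of \<epsilon> M "\<lambda>x. F x - \<psi> x"])
        show "\<epsilon> \<le> M" using eM by simp
        show "\<exists>y. DERIV (\<lambda>x. F x - \<psi> x) x :> y \<and> y \<ge> 0" if "\<epsilon> < x" "x < M" for x
        proof (intro exI conjI)
          show "DERIV (\<lambda>x. F x - \<psi> x) x :> h x - C*(1/sqrt x + (real p/c) * sqrt x)"
            using that e0 by (intro DERIV_diff dFe d\<psi>) auto
          have "real p * x < c"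
          proof -
            have "real p * x \<le> real p * M" using that p2 by (intro mult_left_mono) auto
            then show ?thesis using pM cp_lt by linarith
          qed
          note px = this
          have "C*(1/sqrt x + (real p/c) * sqrt x) \<le> h x"
            unfolding h_def C_def by (rule ineq_lower[OF a0 assms(2) assms(1)]) (use that e0 px in auto)
          then show "h x - C*(1/sqrt x + (real p/c) * sqrt x) \<ge> 0" by linarith
        qed
        show "continuous_on {\<epsilon>..M} (\<lambda>x. F x - \<psi> x)"
        proof (rule DERIV_atLeastAtMost_imp_continuous_on)
          fix x assume x: "\<epsilon> \<le> x" "x \<le> M"
          have "DERIV (\<lambda>x. F x - \<psi> x) x :> h x - C*(1/sqrt x + (real p/c) * sqrt x)"
            using x e0 by (intro DERIV_diff dFe d\<psi>) auto
          then show "\<exists>y. DERIV (\<lambda>x. F x - \<psi> x) x :> y" by blast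
        qed
      qed
      define q where "q = sqrt c"
      define r where "r = sqrt \<epsilon>"
      have q0: "q > 0" using assms by (simp add: q_def)
      have r0: "r \<ge> 0" using e0 by (simp add: r_def)
      have cq: "c = q^2" using assms by (simp add: q_def)
      have er: "\<epsilon> = r^2" using e0 by (simp add: r_def)
      have Mq: "M = q^2 / (real p)^2" using cq by (simp add: M_def)
      have rle: "r \<le> q / (4 * (real p)^2)"
      proof (rule power2_le_imp_le)
        have "r^2 \<le> c / (16 * (real p)^4)"
        proof -
          have "c / (32 * (real p)^4) \<le> c / (16 * (real p)^4)"
            using assms p2 by (intro divide_left_mono) auto
          then show ?thesis using e1 er by linarith
        qed
        also have "c / (16 * (real p)^4) = (q / (4 * (real p)^2))^2"
          using cq by (simp add: power_divide power_mult_distrib power2_eq_square[of "real p"] power4_eq_xxxx)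
        finally show "r^2 \<le> (q / (4 * (real p)^2))^2" .
        show "0 \<le> q / (4 * (real p)^2)" using q0 by simp
      qed
      have N: "3*r*q^2 + real p * r^3 \<le> q^3/(real p)^2"
        using num[of "real p" q r] p2 q0 r0 rle by simp
      have key: "2*C* sqrt M \<le> \<psi> M - \<psi> \<epsilon>"
        unfolding \<psi>_def
      proof (rule key_alg[OF p2 q0 r0 C0])
        show "k = 2 * real p / (3 * q^2)" using cq by (simp add: k_def)
        show "sqrt M = q / real p" using sM by (simp add: q_def)
        show "M = q^2 / (real p)^2" by (rule Mq)
        show "\<epsilon> = r^2" by (rule er)
        show "sqrt \<epsilon> = r" by (simp add: r_def)
        show "3*r*q^2 + real p * r^3 \<le> q^3/(real p)^2" by (rule N)
      qed
      have "2*C* sqrt M = sqrt 2 ^ (p + 1) / c powr ((real p - 1) / 2) * (1 / real p)"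
        unfolding C_def a0_def M_def by (rule consts1(1)[OF assms(2) assms(1)])
      then show "sqrt 2 ^ (p + 1) / c powr ((real p - 1) / 2) * (1 / real p) \<le> T0"
        using key lowmono F0 by (simp add: T0_def)


      define D where "D = 1/(a0 * (c * (1 - 1/real p)) powr (real p/2))"
      have D0: "D > 0"
      proof -
        have "0 < 1 - 1/real p" using p2 by (simp add: field_simps)
        then have "c * (1 - 1/real p) \<noteq> 0" using assms by simp
        then show ?thesis using a0 by (simp add: D_def)
      qed
      define \<psi>2 where "\<psi>2 = (\<lambda>x. D*(2* sqrt x))"
      have d\<psi>2: "DERIV \<psi>2 x :> D*(1/sqrt x)" if "x > 0" for x
      proof -
        have "DERIV \<psi>2 x :> D*(2*(inverse (sqrt x)/2))"
          unfolding \<psi>2_def using that by (intro DERIV_cmult DERIV_real_sqrt)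
        moreover have "2*(inverse (sqrt x)/2) = 1/sqrt x" by (simp add: inverse_eq_divide)
        ultimately show ?thesis by simp
      qed
      have upmono: "\<psi>2 \<epsilon> - F \<epsilon> \<le> \<psi>2 M - F M"
      proof (rule DERIV_nonneg_imp_increasing_open[of \<epsilon> M "\<lambda>x. \<psi>2 x - F x"])
        show "\<epsilon> \<le> M" using eM by simp
        show "\<exists>y. DERIV (\<lambda>x. \<psi>2 x - F x) x :> y \<and> y \<ge> 0" if "\<epsilon> < x" "x < M" for x
        proof (intro exI conjI)
          show "DERIV (\<lambda>x. \<psi>2 x - F x) x :> D*(1/sqrt x) - h x"
            using that e0 by (intro DERIV_diff dFe d\<psi>2) auto
          have "c * (1 - 1/real p) \<le> c - real p * x"
          proof -
            have "real p * x \<le> real p * M" using that p2 by (intro mult_left_mono) auto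
            then show ?thesis using pM by (simp add: right_diff_distrib)
          qed
          note px = this
          have "h x \<le> D*(1/sqrt x)"
            unfolding h_def D_def by (rule ineq_upper[OF a0 assms(2) assms(1)]) (use that e0 px in auto)
          then show "D*(1/sqrt x) - h x \<ge> 0" by linarith
        qed
        show "continuous_on {\<epsilon>..M} (\<lambda>x. \<psi>2 x - F x)"
        proof (rule DERIV_atLeastAtMost_imp_continuous_on)
          fix x assume x: "\<epsilon> \<le> x" "x \<le> M"
          have "DERIV (\<lambda>x. \<psi>2 x - F x) x :> D*(1/sqrt x) - h x"
            using x e0 by (intro DERIV_diff dFe d\<psi>2) auto
          then show "\<exists>y. DERIV (\<lambda>x. \<psi>2 x - F x) x :> y" by blast
        qed
      qed
      have "\<psi>2 \<epsilon> \<ge> 0" using D0 e0 by (simp add: \<psi>2_def)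
      then have "T0 \<le> \<psi>2 M" using upmono F0 by (simp add: T0_def)
      moreover have "2*D* sqrt M = sqrt 2 ^ (p + 1) / (c powr ((real p - 1) / 2) * (1 - 1 / real p) powr (real p / 2)) * (1 / real p)"
        unfolding D_def a0_def M_def by (rule consts1(2)[OF assms(2) assms(1)])
      moreover have "\<psi>2 M = 2*D* sqrt M" by (simp add: \<psi>2_def)
      ultimately show "T0 \<le> sqrt 2 ^ (p + 1) / (c powr ((real p - 1) / 2) * (1 - 1 / real p) powr (real p / 2)) * (1 / real p)"
        by linarith

    qed
  qed
qed

end
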